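(* Let $0\le \alpha\le 1$ and let $f(z)=z+a_2z^2+a_3z^3+\cdots$ be analytic in $\Delta=\{z\in\mathbb{C}:|z|<1\}$ with $f\in\mathcal{SK}(\alpha)$. Then \[ \mathrm{Re}\left(\frac{f(z)}{z}\right)>\gamma(\alpha):=\frac{2\alpha^2+3\alpha+9}{3(\alpha^2+3\alpha+6)}\qquad(z\in\Delta). \]
   Context: For analytic $F,G$ on $\Delta$, $F\prec G$ ($F$ is subordinate to $G$) means there is an analytic $w:\Delta\to\Delta$ with $w(0)=0$ such that $F(z)=G(w(z))$ for all $z\in\Delta$. For $\alpha\in(-3,1]$ let $\widetilde{q}_\alpha(z)=\dfrac{3}{3+(\alpha-3)z-\alpha z^2}$ ($z\in\Delta$). The class $\mathcal{SK}(\alpha)$ consists of all analytic $f$ on $\Delta$ with $f(0)=0$, $f'(0)=1$, such that $\dfrac{zf'(z)}{f(z)}\prec \widetilde{q}_\alpha(z)$ in $\Delta$. *)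

theory Defs
  imports "HOL-Complex_Analysis.Complex_Analysis"
begin

definition subordinate :: "(complex \<Rightarrow> complex) \<Rightarrow> (complex \<Rightarrow> complex) \<Rightarrow> bool" where
  "subordinate F G \<longleftrightarrow>
     (\<exists>w. w holomorphic_on ball 0 1 \<and> w ` ball 0 1 \<subseteq> ball 0 1 \<and> w 0 = 0 \<and>
          (\<forall>z\<in>ball 0 1. F z = G (w z)))"

definition q_tilde :: "real \<Rightarrow> complex \<Rightarrow> complex" where
  "q_tilde \<alpha> z = 3 / (3 + (of_real \<alpha> - 3) * z - of_real \<alpha> * z ^ 2)"

text \<open>The class SK(alpha), for alpha in (-3,1]. The quotient z f'(z)/f(z) is taken
  with its removable-singularity value 1 at z = 0 (as f(0)=0, f'(0)=1).\<close>
definition SK :: "real \<Rightarrow> (complex \<Rightarrow> complex) set" where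
  "SK \<alpha> = {f. f holomorphic_on ball 0 1 \<and> f 0 = 0 \<and> deriv f 0 = 1 \<and>
              subordinate (\<lambda>z. if z = 0 then 1 else z * deriv f z / f z) (q_tilde \<alpha>)}"

definition gamma_SK :: "real \<Rightarrow> real" where
  "gamma_SK \<alpha> = (2 * \<alpha>^2 + 3 * \<alpha> + 9) / (3 * (\<alpha>^2 + 3 * \<alpha> + 6))"

end

theory Submission imports Defs begin

lemma re_circle: fixes a :: complex assumes "norm a = 1" "a \<noteq> 1"
  shows "Re (a / (1 - a)) = -1/2"
proof -
  have n: "(Re a)^2 + (Im a)^2 = 1" using assms(1) by (simp add: cmod_def)
  have d: "(1 - Re a)^2 + (Im a)^2 \<noteq> 0" using assms(2) complex_eq_iff[of a 1] by (auto simp: power2_eq_square)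
  have "Re (a / (1 - a)) = (Re a * (1 - Re a) - Im a * Im a) / ((1 - Re a)^2 + (Im a)^2)"
    by (simp add: Re_divide power2_eq_square algebra_simps)
  also have "\<dots> = -1/2" using n d by (simp add: field_simps power2_eq_square)
  finally show ?thesis .
qed

lemma jack_core:
  assumes holu: "u holomorphic_on ball 0 1" and r: "0<r" "r<1" and z0: "norm z0 = r"
    and inside: "\<And>z. norm z < r \<Longrightarrow> norm (u z) \<le> norm z / r"
    and a1: "norm (u z0) = 1" and a2: "u z0 \<noteq> 1"
  shows "Re (z0 * deriv u z0 / (1 - u z0)) \<le> -1/2"
proof (rule ccontr)
  assume H: "\<not> ?thesis"
  define a where "a = u z0"
  define b where "b = deriv u z0"
  define c where "c = z0 * b / a"
  have a0: "a \<noteq> 0" using a1 a_def by auto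
  have ca: "cnj a * a = 1" using a1 a_def by (metis complex_norm_square mult.commute norm_one of_real_1 power_one)
  have cinv: "cnj a = 1 / a" using ca a0 by (simp add: field_simps)
  have eq: "z0 * b / (1 - a) = c * (a / (1 - a))" using a0 by (simp add: c_def)
  have Hc: "Re (c * (a / (1 - a))) > -1/2" using H eq a_def b_def by auto
  have notreal: "\<not> (Im c = 0 \<and> Re c \<ge> 1)"
  proof
    assume "Im c = 0 \<and> Re c \<ge> 1"
    hence "c = of_real (Re c)" by (simp add: complex_eq_iff)
    moreover have "Re (of_real (Re c) * (a / (1 - a))) = Re c * Re (a / (1 - a))" by (simp only: times_complex.sel Re_complex_of_real Im_complex_of_real mult_zero_left diff_zero)
    ultimately have "Re (c * (a / (1 - a))) = Re c * Re (a / (1 - a))" by metis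
    also have "\<dots> = - Re c / 2" using re_circle[of a] a1 a2 a_def by simp
    finally show False using Hc \<open>Im c = 0 \<and> Re c \<ge> 1\<close> by simp
  qed
  define w where "w = 1 - c"
  have w0: "w \<noteq> 0" using notreal w_def by auto
  define e where "e = 1 + cnj w / norm w"
  have wn: "Re w > - norm w"
  proof -
    have "Re w \<ge> - norm w" using abs_Re_le_cmod[of w] by linarith
    moreover have "Re w \<noteq> - norm w"
    proof
      assume "Re w = - norm w"
      hence "(Im w)^2 = 0" using cmod_power2[of w] by (simp add: power2_eq_square)
      hence "Im w = 0" by simp
      thus False using notreal w_def \<open>Re w = - norm w\<close> by (auto simp: cmod_def)
    qed
    ultimately show ?thesis by linarith
  qed
  have Ree: "Re e > 0" using wn w0 by (simp add: e_def field_simps)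
  have Rewe: "Re (w * e) > 0"
  proof -
    have "w * e = w + norm w" using w0 by (simp add: e_def field_simps complex_norm_square[symmetric] power2_eq_square)
    thus ?thesis using wn by simp
  qed
  have z0b: "z0 \<in> ball 0 1" using z0 r by simp
  have du: "(u has_field_derivative b) (at z0)" unfolding b_def
    using holomorphic_derivI[OF holu open_ball z0b] by blast
  define g where "g = (\<lambda>t. cnj a * u (z0 * exp (-(t * e))))"
  have dg: "(g has_field_derivative (cnj a * (b * (z0 * (exp (-(of_real 0 * e)) * (-e)))))) (at (of_real 0))"
    unfolding g_def
    apply (rule DERIV_cmult)
    apply (rule DERIV_chain2[of u])
    using du apply simp
    by (auto intro!: derivative_eq_intros)
  define D where "D = cnj a * (b * (z0 * (exp (-(of_real 0 * e)) * (-e))))"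
  have Deq: "D = - (c * e)" unfolding D_def c_def cinv by (simp add: field_simps)
  define \<psi> where "\<psi> = (\<lambda>s::real. Re (g (of_real s)) - exp (-(s * Re e)))"
  have dpsi: "(\<psi> has_field_derivative (Re D + Re e)) (at 0)"
    unfolding \<psi>_def
    apply (rule derivative_eq_intros)
      apply (rule has_field_derivative_Re)
      apply (rule has_vector_derivative_real_field)
    using dg unfolding D_def[symmetric] apply simp
     apply (auto intro!: derivative_eq_intros)
    done
  have pos: "Re D + Re e > 0" using Rewe unfolding Deq w_def by (simp add: algebra_simps)
  obtain d where d: "d > 0" "\<forall>h>0. h < d \<longrightarrow> \<psi> 0 < \<psi> (0 + h)"
    using DERIV_pos_inc_right[OF dpsi pos] by blast
  have psi0: "\<psi> 0 = 0" unfolding \<psi>_def g_def using ca a_def by simp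
  define s where "s = d / 2"
  have s: "s > 0" "s < d" using d by (auto simp: s_def)
  have gt: "\<psi> s > 0" using d s psi0 by auto
  define zz where "zz = z0 * exp (-(of_real s * e))"
  have nzz: "norm zz = r * exp (-(s * Re e))" unfolding zz_def using z0 by (simp add: norm_mult norm_exp_eq_Re)
  have "exp (-(s * Re e)) < 1" using s Ree by simp
  hence lt: "norm zz < r" using nzz r by simp
  have "Re (g (of_real s)) \<le> norm (g (of_real s))" by (rule complex_Re_le_cmod)
  also have "\<dots> = norm (u zz)" unfolding g_def zz_def using a1 a_def by (simp add: norm_mult)
  also have "\<dots> \<le> norm zz / r" using inside[OF lt] .
  also have "\<dots> = exp (-(s * Re e))" using nzz r by simp
  finally show False using gt unfolding \<psi>_def by simp
qed
lemma jack:
  assumes holu: "u holomorphic_on ball 0 1" and u0: "u 0 = 0"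
    and ne1: "\<And>z. z \<in> ball 0 1 \<Longrightarrow> u z \<noteq> 1"
    and hyp: "\<And>z. z \<in> ball 0 1 \<Longrightarrow> z \<noteq> 0 \<Longrightarrow> Re (z * deriv u z / (1 - u z)) > -1/2"
    and z1: "z1 \<in> ball 0 1"
  shows "norm (u z1) < 1"
proof (rule ccontr)
  assume "\<not> ?thesis"
  hence u1: "norm (u z1) \<ge> 1" by simp
  define R where "R = norm z1"
  have R1: "R < 1" using z1 R_def by simp
  have sub: "cball 0 R \<subseteq> ball 0 1" using R1 by auto
  have contu: "continuous_on (ball 0 1) u" using holu holomorphic_on_imp_continuous_on by blast
  have contn: "continuous_on (cball 0 R) (\<lambda>z. norm (u z))"
    using continuous_on_subset[OF contu sub] by (intro continuous_intros)
  define S where "S = cball 0 R \<inter> (\<lambda>z. norm (u z)) -` {1..}"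
  have "closed S" unfolding S_def by (rule continuous_closed_preimage[OF contn]) auto
  moreover have "bounded S" unfolding S_def by (rule bounded_subset[of "cball 0 R"]) auto
  ultimately have cS: "compact S" using compact_eq_bounded_closed by blast
  have "z1 \<in> S" using u1 unfolding S_def R_def by auto
  hence "S \<noteq> {}" by blast
  then obtain z0 where z0S: "z0 \<in> S" and z0min: "\<And>y. y \<in> S \<Longrightarrow> norm z0 \<le> norm y"
    using continuous_attains_inf[OF cS, of norm] continuous_on_norm_id by blast
  define r where "r = norm z0"
  have rR: "r \<le> R" and uz0: "norm (u z0) \<ge> 1" using z0S unfolding S_def r_def by auto
  have "z0 \<noteq> 0" using uz0 u0 by auto
  hence r0: "r > 0" unfolding r_def by simp
  have r1: "r < 1" using rR R1 by simp
  have z0b: "z0 \<in> ball 0 1" using r1 r_def by simp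
  have inner: "norm (u z) < 1" if "norm z < r" for z
  proof (rule ccontr)
    assume "\<not> ?thesis"
    hence "z \<in> S" using that rR unfolding S_def by auto
    hence "norm z0 \<le> norm z" by (rule z0min)
    thus False using that r_def by simp
  qed
  have uz0le: "norm (u z0) \<le> 1"
  proof (rule ccontr)
    assume "\<not> ?thesis"
    define V where "V = ball 0 1 \<inter> (\<lambda>z. norm (u z)) -` {1<..}"
    have contn': "continuous_on (ball 0 1) (\<lambda>z. norm (u z))" using contu by (intro continuous_intros)
    have "open V" unfolding V_def by (rule continuous_open_preimage[OF contn']) auto
    moreover have "z0 \<in> V" using z0b \<open>\<not> norm (u z0) \<le> 1\<close> unfolding V_def by auto
    ultimately obtain \<epsilon> where \<epsilon>: "\<epsilon> > 0" "ball z0 \<epsilon> \<subseteq> V" using openE by blast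
    define \<delta> where "\<delta> = min (1/2) (\<epsilon> / (2 * r))"
    have \<delta>: "\<delta> > 0" "\<delta> \<le> 1/2" "\<delta> * r < \<epsilon>" using \<epsilon> r0 by (auto simp: \<delta>_def min_def field_simps)
    define z where "z = of_real (1 - \<delta>) * z0"
    have "dist z0 z = \<delta> * r" unfolding z_def dist_norm r_def
      using \<delta> by (simp add: algebra_simps norm_mult flip: scaleR_conv_of_real)
    hence "z \<in> V" using \<epsilon> \<delta> by auto
    hence "norm (u z) > 1" unfolding V_def by auto
    moreover have "norm z < r"
    proof -
      have "norm z = \<bar>1 - \<delta>\<bar> * r" unfolding z_def r_def by (simp only: norm_mult norm_of_real)
      thus ?thesis using \<delta> r0 by simp
    qed
    ultimately show False using inner[of z] by simp
  qed
  have ua1: "norm (u z0) = 1" using uz0 uz0le by simp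
  have inside: "norm (u z) \<le> norm z / r" if "norm z < r" for z
  proof -
    define v where "v = (\<lambda>\<zeta>. u (of_real r * \<zeta>))"
    have img: "(\<lambda>\<zeta>::complex. of_real r * \<zeta>) ` ball 0 1 \<subseteq> ball 0 1"
    proof
      fix y assume "y \<in> (\<lambda>\<zeta>::complex. of_real r * \<zeta>) ` ball 0 1"
      then obtain \<zeta> where y: "y = of_real r * \<zeta>" "norm \<zeta> < 1" using \<open>y \<in> _\<close> by force
      have "norm y = r * norm \<zeta>" using y r0 by (simp add: norm_mult)
      also have "\<dots> < r * 1" using y r0 by (intro mult_strict_left_mono) auto
      finally show "y \<in> ball 0 1" using r1 by simp
    qed
    have hv: "v holomorphic_on ball 0 1" unfolding v_def
      by (rule holomorphic_on_compose_gen[OF _ holu img, unfolded o_def]) (intro holomorphic_intros)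
    have v0: "v 0 = 0" using u0 v_def by simp
    have vn: "norm (v \<zeta>) < 1" if "norm \<zeta> < 1" for \<zeta>
      unfolding v_def using that r0 by (intro inner) (simp add: norm_mult)
    have zr: "norm (z / of_real r) < 1" using that r0 by (simp add: norm_divide)
    have "norm (v (z / of_real r)) \<le> norm (z / of_real r)" by (rule Schwarz_Lemma(1)[OF hv v0 vn zr])
    moreover have "v (z / of_real r) = u z" unfolding v_def using r0 by simp
    ultimately show ?thesis using r0 by (simp add: norm_divide)
  qed
  have "Re (z0 * deriv u z0 / (1 - u z0)) \<le> -1/2"
    by (rule jack_core[OF holu r0 r1 r_def[symmetric] inside ua1 ne1[OF z0b]])
  thus False using hyp[OF z0b \<open>z0 \<noteq> 0\<close>] by simp
qed

lemma re_inv: fixes x :: complex assumes "norm x < 1" shows "Re (1 / (1 - x)) > 1/2"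
proof -
  have "(norm x)^2 < 1^2" using assms by (intro power_strict_mono) auto
  hence n: "(Re x)^2 + (Im x)^2 < 1" by (simp add: cmod_power2)
  have rx: "Re x < 1" using abs_Re_le_cmod[of x] assms by linarith
  have pos: "(1 - Re x)^2 + (Im x)^2 > 0" using rx by (simp add: add_pos_nonneg)
  have "Re (1 / (1 - x)) = (1 - Re x) / ((1 - Re x)^2 + (Im x)^2)"
    by (simp add: Re_divide power2_eq_square)
  also have "\<dots> > 1/2" using n pos rx by (simp add: field_simps power2_eq_square)
  finally show ?thesis .
qed

lemma qre:
  assumes a0: "0 \<le> \<alpha>" and a1: "\<alpha> \<le> 1" and om: "norm \<omega> < 1"
  shows "Re (q_tilde \<alpha> \<omega>) > 1/2"
proof -
  define D where "D = 3 + (of_real \<alpha> - 3) * \<omega> - of_real \<alpha> * \<omega> ^ 2"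
  have "D - 3 = \<omega> * (of_real \<alpha> - 3 - of_real \<alpha> * \<omega>)" unfolding D_def by (simp add: algebra_simps power2_eq_square)
  hence "norm (D - 3) = norm \<omega> * norm (of_real \<alpha> - 3 - of_real \<alpha> * \<omega>)" by (simp add: norm_mult)
  also have "\<dots> \<le> norm \<omega> * ((3 - \<alpha>) + \<alpha> * norm \<omega>)"
  proof (rule mult_left_mono)
    have "norm (of_real \<alpha> - 3 - of_real \<alpha> * \<omega>) \<le> norm (of_real \<alpha> - 3 :: complex) + norm (of_real \<alpha> * \<omega>)"
      by (rule norm_triangle_ineq4)
    also have "norm (of_real \<alpha> - 3 :: complex) = 3 - \<alpha>"
    proof -
      have "(of_real \<alpha> - 3 :: complex) = of_real (\<alpha> - 3)" by simp
      thus ?thesis using a1 norm_of_real[of "\<alpha> - 3"] by simp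
    qed
    also have "norm (of_real \<alpha> * \<omega>) = \<alpha> * norm \<omega>" using a0 by (simp add: norm_mult)
    finally show "norm (of_real \<alpha> - 3 - of_real \<alpha> * \<omega>) \<le> (3 - \<alpha>) + \<alpha> * norm \<omega>" .
  qed simp
  also have "\<dots> < 3"
  proof -
    have "(3 - \<alpha>) + \<alpha> * norm \<omega> \<le> 3" using a0 om by (simp add: mult_left_le)
    moreover have "(3 - \<alpha>) + \<alpha> * norm \<omega> > 0" using a1 a0 by (simp add: add_pos_nonneg)
    ultimately have "norm \<omega> * ((3 - \<alpha>) + \<alpha> * norm \<omega>) \<le> norm \<omega> * 3" by (simp add: mult_left_mono)
    thus ?thesis using om by linarith
  qed
  finally have lt: "norm (D - 3) < 3" .
  have "(norm (D - 3))^2 < 3^2" using lt by (intro power_strict_mono) auto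
  moreover have "(norm (D - 3))^2 = (Re D - 3)^2 + (Im D)^2" by (simp add: cmod_power2)
  ultimately have sq: "(Re D - 3)^2 + (Im D)^2 < 9" by simp
  have ex: "(Re D - 3)^2 = (Re D)^2 - 6 * Re D + 9" by (simp add: power2_eq_square algebra_simps)
  have "(Re D)^2 \<ge> 0" "(Im D)^2 \<ge> 0" by simp_all
  hence "Re D > 0" using sq ex by linarith
  hence Dpos: "(Re D)^2 + (Im D)^2 > 0" by (simp add: add_pos_nonneg)
  have "q_tilde \<alpha> \<omega> = 3 / D" unfolding q_tilde_def D_def by simp
  hence "Re (q_tilde \<alpha> \<omega>) = 3 * Re D / ((Re D)^2 + (Im D)^2)"
    by (simp add: Re_divide power2_eq_square)
  also have "\<dots> > 1/2" using sq Dpos by (simp add: field_simps power2_eq_square)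
  finally show ?thesis .
qed

lemma gamma_le: assumes "0 \<le> \<alpha>" "\<alpha> \<le> 1" shows "gamma_SK \<alpha> \<le> 1/2"
proof -
  have "\<alpha>^2 \<ge> 0" by simp
  hence p: "3 * (\<alpha>^2 + 3 * \<alpha> + 6) > 0"
  proof -
    have "\<alpha>^2 + 3 * \<alpha> + 6 > 0" using assms \<open>\<alpha>^2 \<ge> 0\<close> by linarith
    thus ?thesis by simp
  qed
  have "2 * (2 * \<alpha>^2 + 3 * \<alpha> + 9) \<le> 3 * (\<alpha>^2 + 3 * \<alpha> + 6)" using assms
  proof -
    have "\<alpha>^2 \<le> \<alpha>" using assms by (simp add: power2_eq_square mult_left_le)
    moreover have "2 * (2 * \<alpha>^2 + 3 * \<alpha> + 9) = 4 * \<alpha>^2 + 6 * \<alpha> + 18"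
      "3 * (\<alpha>^2 + 3 * \<alpha> + 6) = 3 * \<alpha>^2 + 9 * \<alpha> + 18" by simp_all
    ultimately show ?thesis using assms by linarith
  qed
  thus ?thesis unfolding gamma_SK_def using p by (simp add: field_simps)
qed

theorem theorem2p1:
  fixes \<alpha> :: real and f :: "complex \<Rightarrow> complex" and z :: complex
  assumes "0 \<le> \<alpha>" and "\<alpha> \<le> 1"
    and "f \<in> SK \<alpha>"
    and "z \<in> ball 0 1"
  shows "Re (if z = 0 then 1 else f z / z) > gamma_SK \<alpha>"
proof -
  note a0 = assms(1) and a1 = assms(2)
  have holf: "f holomorphic_on ball 0 1" and f0: "f 0 = 0" and df0: "deriv f 0 = 1"
    and sub: "subordinate (\<lambda>z. if z = 0 then 1 else z * deriv f z / f z) (q_tilde \<alpha>)"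
    using assms(3) unfolding SK_def by auto
  obtain w where wimg: "w ` ball 0 1 \<subseteq> ball 0 1"
    and weq: "\<And>z. z \<in> ball 0 1 \<Longrightarrow> (if z = 0 then 1 else z * deriv f z / f z) = q_tilde \<alpha> (w z)"
    using sub unfolding subordinate_def by blast
  have Pre: "Re (z * deriv f z / f z) > 1/2" if "z \<in> ball 0 1" "z \<noteq> 0" for z
  proof -
    have "w z \<in> ball 0 1" using wimg that(1) by blast
    hence "norm (w z) < 1" by simp
    hence "Re (q_tilde \<alpha> (w z)) > 1/2" using qre a0 a1 by blast
    thus ?thesis using weq[OF that(1)] that(2) by simp
  qed
  have fnz: "f z \<noteq> 0" if "z \<in> ball 0 1" "z \<noteq> 0" for z
    using Pre[OF that] by auto
  define h where "h = (\<lambda>z. if z = 0 then 1 else f z / z)"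
  have "(\<lambda>z. if z = 0 then deriv f 0 else (f z - f 0) / (z - 0)) holomorphic_on ball 0 1"
    by (rule pole_lemma[OF holf]) simp
  moreover have "(\<lambda>z. if z = 0 then deriv f 0 else (f z - f 0) / (z - 0)) = h"
    unfolding h_def using f0 df0 by (auto simp: fun_eq_iff)
  ultimately have holh: "h holomorphic_on ball 0 1" by simp
  have hnz: "h z \<noteq> 0" if "z \<in> ball 0 1" for z using fnz[OF that] unfolding h_def by auto
  define u where "u = (\<lambda>z. 1 - 1 / h z)"
  have holu: "u holomorphic_on ball 0 1" unfolding u_def using holh hnz by (intro holomorphic_intros) auto
  have u0: "u 0 = 0" unfolding u_def h_def by simp
  have ne1: "u z \<noteq> 1" if "z \<in> ball 0 1" for z using hnz[OF that] unfolding u_def by simp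
  have hyp: "Re (z * deriv u z / (1 - u z)) > -1/2" if zb: "z \<in> ball 0 1" and z0: "z \<noteq> 0" for z
  proof -
    have fz: "f z \<noteq> 0" using fnz[OF zb z0] .
    have df: "(f has_field_derivative deriv f z) (at z)" using holomorphic_derivI[OF holf open_ball zb] by blast
    have d1: "((\<lambda>z. f z / z) has_field_derivative (deriv f z * z - f z * 1) / (z * z)) (at z)"
      using DERIV_divide[OF df DERIV_ident z0] .
    define Dh where "Dh = (deriv f z * z - f z * 1) / (z * z)"
    have dh: "(h has_field_derivative Dh) (at z)"
      unfolding Dh_def
      by (rule has_field_derivative_transform_within_open[OF d1, of "ball 0 1 - {0}"]) (use zb z0 in \<open>auto simp: h_def\<close>)
    have du: "(u has_field_derivative Dh / (h z)^2) (at z)" unfolding u_def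
      using dh hnz[OF zb] by (auto intro!: derivative_eq_intros simp: power2_eq_square)
    have "deriv u z = Dh / (h z)^2" using DERIV_imp_deriv[OF du] .
    moreover have "h z = f z / z" using z0 h_def by simp
    moreover have uz: "1 - u z = 1 / h z" by (simp add: u_def)
    moreover have hz0: "h z \<noteq> 0" using hnz[OF zb] .
    ultimately have e1: "z * deriv u z / (1 - u z) = z * Dh / h z"
    proof -
      have gen: "z * (Dh / H^2) / (1 / H) = z * Dh / H" if "H \<noteq> 0" for H :: complex
        using that by (simp add: field_simps power2_eq_square)
      show ?thesis using gen[OF hz0] \<open>deriv u z = Dh / (h z)^2\<close> uz by simp
    qed
    have e2: "z * Dh / h z = z * deriv f z / f z - 1" using \<open>h z = f z / z\<close> z0 fz
      by (simp add: Dh_def field_simps power2_eq_square)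
    have "z * deriv u z / (1 - u z) = z * deriv f z / f z - 1" using e1 e2 by simp
    thus ?thesis using Pre[OF zb z0] by simp
  qed
  have un: "norm (u z) < 1" by (rule jack[OF holu u0 ne1 hyp assms(4)])
  have g: "gamma_SK \<alpha> \<le> 1/2" using gamma_le a0 a1 .
  show ?thesis
  proof (cases "z = 0")
    case True thus ?thesis using g by simp
  next
    case False
    have "f z / z = 1 / (1 - u z)" unfolding u_def h_def using False by simp
    thus ?thesis using re_inv[OF un] g False by simp
  qed
qed

end
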